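(* Let $\mathbb{R}^n$ be endowed with the $\ell_1$ norm, let $A\in\mathbb{R}^{m\times n}$ have at least two different columns, and let $f:\mathbb{R}^m\to\mathbb{R}\cup\{\infty\}$ be a differentiable convex function with $\mathrm{conv}(A)\subseteq\mathrm{dom}(f)$ and $\mu^\star_{f,A}>0$. Consider any run of the Frank–Wolfe algorithm with away steps (described below), with arbitrary step sizes $\alpha_k\in[0,\alpha_{\max}]$. Then at every iteration $k$ the direction $v$ chosen satisfies \[ \langle\nabla f(u_k),v\rangle^2\ge\frac{\mu^\star_{f,A}}{2}(f(u_k)-f^\star)\qquad\text{and}\qquad\langle\nabla f(u_k),v\rangle\le f^\star-f(u_k). \]
   Context: $\Delta_{n-1}=\{x\in\mathbb{R}^n_+:\sum_ix_i=1\}$, $e_i$ standard basis vectors, $a_1,\dots,a_n$ the columns of $A$, $\mathrm{conv}(A)=\{Ax:x\in\Delta_{n-1}\}$; for $x\in\Delta_{n-1}$, $I(x)=\{i:x_i>0\}$. $f^\star=\min_{x\in\Delta_{n-1}}f(Ax)$, $Z^\star=\{z\in\Delta_{n-1}:f(Az)=f^\star\}$, and $\mu^\star_{f,A}=\inf_{x\in\Delta_{n-1}\setminus Z^\star}\frac{2(f(Ax)-f^\star)}{\mathrm{dist}(x,Z^\star)^2}$ with $\mathrm{dist}(x,Z^\star)=\min_{z\in Z^\star}\|x-z\|_1$. Algorithm (Frank–Wolfe with away steps): pick $x_0\in\Delta_{n-1}$, $u_0=Ax_0$. For $k=0,1,2,\dots$: let $j\in\operatorname{argmin}_{i=1,\dots,n}\langle\nabla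 f(u_k),a_i\rangle$ and $\ell\in\operatorname{argmax}_{i\in I(x_k)}\langle\nabla f(u_k),a_i\rangle$. If $\langle\nabla f(u_k),a_j-u_k\rangle<\langle\nabla f(u_k),u_k-a_\ell\rangle$ or $|I(x_k)|=1$ (regular step), set $v=a_j-u_k$, $w=e_j-x_k$, $\alpha_{\max}=1$; otherwise (away step) set $v=u_k-a_\ell$, $w=x_k-e_\ell$, $\alpha_{\max}=\frac{\langle e_\ell,x_k\rangle}{1-\langle e_\ell,x_k\rangle}$. Choose $\alpha_k\in[0,\alpha_{\max}]$ and set $x_{k+1}=x_k+\alpha_kw$, $u_{k+1}=u_k+\alpha_kv=Ax_{k+1}$. *)

theory Defs
  imports "HOL-Analysis.Analysis"
begin

definition std_simplex :: "(real^'n::finite) set" where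
  "std_simplex = {x. (\<forall>i. 0 \<le> x $ i) \<and> (\<Sum>i\<in>UNIV. x $ i) = 1}"

definition supp_idx :: "real^'n::finite \<Rightarrow> 'n set" where
  "supp_idx x = {i. x $ i > 0}"

definition l1dist :: "real^'n::finite \<Rightarrow> real^'n \<Rightarrow> real" where
  "l1dist x z = (\<Sum>i\<in>UNIV. \<bar>x $ i - z $ i\<bar>)"

definition fstar :: "(real^'m \<Rightarrow> real) \<Rightarrow> real^'n::finite^'m::finite \<Rightarrow> real" where
  "fstar f A = Inf ((\<lambda>x. f (A *v x)) ` std_simplex)"

definition Zstar :: "(real^'m \<Rightarrow> real) \<Rightarrow> real^'n::finite^'m::finite \<Rightarrow> (real^'n) set" where
  "Zstar f A = {z \<in> std_simplex. f (A *v z) = fstar f A}"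

definition distZ :: "(real^'m \<Rightarrow> real) \<Rightarrow> real^'n::finite^'m::finite \<Rightarrow> real^'n \<Rightarrow> real" where
  "distZ f A x = Inf ((\<lambda>z. l1dist x z) ` Zstar f A)"

text \<open>mu^*_{f,A} as an extended real (infimum over the empty set is +\<infinity>).\<close>
definition mu_star :: "(real^'m \<Rightarrow> real) \<Rightarrow> real^'n::finite^'m::finite \<Rightarrow> ereal" where
  "mu_star f A = (INF x \<in> std_simplex - Zstar f A.
      ereal (2 * (f (A *v x) - fstar f A) / (distZ f A x)\<^sup>2))"

text \<open>Frank--Wolfe with away steps: one step, given gradient g = \<nabla>f(u_k), iterate x,
  FW vertex j and away vertex l.\<close>
definition fw_regular :: "real^'m \<Rightarrow> real^'n::finite^'m::finite \<Rightarrow> real^'n \<Rightarrow> 'n \<Rightarrow> 'n \<Rightarrow> bool" where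
  "fw_regular g A x j l \<longleftrightarrow>
     g \<bullet> (column j A - A *v x) < g \<bullet> (A *v x - column l A) \<or> card (supp_idx x) = 1"

definition fw_dir :: "real^'m \<Rightarrow> real^'n::finite^'m::finite \<Rightarrow> real^'n \<Rightarrow> 'n \<Rightarrow> 'n \<Rightarrow> real^'m" where
  "fw_dir g A x j l = (if fw_regular g A x j l then column j A - A *v x else A *v x - column l A)"

definition fw_w :: "real^'m \<Rightarrow> real^'n::finite^'m::finite \<Rightarrow> real^'n \<Rightarrow> 'n \<Rightarrow> 'n \<Rightarrow> real^'n" where
  "fw_w g A x j l = (if fw_regular g A x j l then axis j 1 - x else x - axis l 1)"

definition fw_amax :: "real^'m \<Rightarrow> real^'n::finite^'m::finite \<Rightarrow> real^'n \<Rightarrow> 'n \<Rightarrow> 'n \<Rightarrow> real" where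
  "fw_amax g A x j l = (if fw_regular g A x j l then 1 else x $ l / (1 - x $ l))"

definition fw_away_run ::
  "real^'n::finite^'m::finite \<Rightarrow> (real^'m \<Rightarrow> real^'m) \<Rightarrow> (nat \<Rightarrow> real^'n) \<Rightarrow> (nat \<Rightarrow> 'n) \<Rightarrow> (nat \<Rightarrow> 'n) \<Rightarrow> (nat \<Rightarrow> real) \<Rightarrow> bool" where
  "fw_away_run A grad x j l \<alpha> \<longleftrightarrow>
     x 0 \<in> std_simplex \<and>
     (\<forall>k. let g = grad (A *v x k) in
        (\<forall>i. g \<bullet> column (j k) A \<le> g \<bullet> column i A) \<and>
        l k \<in> supp_idx (x k) \<and>
        (\<forall>i\<in>supp_idx (x k). g \<bullet> column i A \<le> g \<bullet> column (l k) A) \<and>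
        0 \<le> \<alpha> k \<and> \<alpha> k \<le> fw_amax g A (x k) (j k) (l k) \<and>
        x (Suc k) = x k + \<alpha> k *\<^sub>R fw_w g A (x k) (j k) (l k))"

end

theory Submission imports Defs begin

lemma inner_Av: "(g::real^'m::finite) \<bullet> ((A::real^'n::finite^'m) *v y) = (\<Sum>i\<in>UNIV. y$i * (g \<bullet> column i A))"
proof -
  have "g \<bullet> (A *v y) = (\<Sum>r\<in>UNIV. g$r * (\<Sum>i\<in>UNIV. A$r$i * y$i))"
    by (simp add: inner_vec_def matrix_vector_mult_def)
  also have "\<dots> = (\<Sum>r\<in>UNIV. \<Sum>i\<in>UNIV. y$i * (g$r * A$r$i))"
    by (simp add: sum_distrib_left mult_ac)
  also have "\<dots> = (\<Sum>i\<in>UNIV. \<Sum>r\<in>UNIV. y$i * (g$r * A$r$i))"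
    by (rule sum.swap)
  also have "\<dots> = (\<Sum>i\<in>UNIV. y$i * (g \<bullet> column i A))"
    by (simp add: inner_vec_def column_def sum_distrib_left)
  finally show ?thesis .
qed

lemma grad_ineq:
  fixes f :: "'a::real_normed_vector \<Rightarrow> real" and G :: "'a \<Rightarrow> 'a \<Rightarrow> real"
  assumes "open D" "convex_on D f" "(f has_derivative G u) (at u)" "linear (G u)" "u \<in> D" "y \<in> D"
  shows "f y \<ge> f u + G u (y - u)"
proof -
  define w where "w = y - u"
  define S where "S = {t::real. u + t *\<^sub>R w \<in> D}"
  have cD: "convex D" using assms(2) convex_on_imp_convex by blast
  have oS: "open S" unfolding S_def
    using continuous_open_vimage[OF assms(1), of "\<lambda>t. u + t *\<^sub>R w"] by (auto simp: vimage_def)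
  have cS: "convex S" unfolding S_def convex_def
  proof (intro allI impI ballI, clarsimp)
    fix s t a b :: real assume h: "u + s *\<^sub>R w \<in> D" "u + t *\<^sub>R w \<in> D" "0 \<le> a" "0 \<le> b" "a + b = 1"
    have "u + (a * s + b * t) *\<^sub>R w = a *\<^sub>R (u + s *\<^sub>R w) + b *\<^sub>R (u + t *\<^sub>R w)"
      using h(5) by (simp add: algebra_simps scaleR_add_left[symmetric] del: scaleR_add_left)
    then show "u + (a * s + b * t) *\<^sub>R w \<in> D" using cD h unfolding convex_def by simp
  qed
  have cvx: "convex_on S (\<lambda>t. f (u + t *\<^sub>R w))"
  proof (rule convex_onI[OF _ cS])
    fix a s t :: real assume h: "0 < a" "a < 1" "s \<in> S" "t \<in> S"
    have e: "u + ((1 - a) *\<^sub>R s + a *\<^sub>R t) *\<^sub>R w = (1 - a) *\<^sub>R (u + s *\<^sub>R w) + a *\<^sub>R (u + t *\<^sub>R w)"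
      by (simp add: algebra_simps)
    show "f (u + ((1 - a) *\<^sub>R s + a *\<^sub>R t) *\<^sub>R w) \<le> (1 - a) * f (u + s *\<^sub>R w) + a * f (u + t *\<^sub>R w)"
      unfolding e using convex_onD[OF assms(2)] h unfolding S_def by simp
  qed
  have d1: "((\<lambda>t. u + t *\<^sub>R w) has_derivative (\<lambda>t. t *\<^sub>R w)) (at 0)"
    by (auto intro!: derivative_eq_intros)
  have d2: "(f has_derivative G u) (at (u + 0 *\<^sub>R w))" using assms(3) by simp
  have "((\<lambda>t. f (u + t *\<^sub>R w)) has_derivative (\<lambda>t. G u (t *\<^sub>R w))) (at 0)"
    using has_derivative_compose[OF d1 d2] by (simp add: o_def)
  moreover have "(\<lambda>t. G u (t *\<^sub>R w)) = (\<lambda>t. G u w * t)"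
    using linear_scale[OF assms(4)] by (auto simp: mult.commute)
  ultimately have "((\<lambda>t. f (u + t *\<^sub>R w)) has_field_derivative G u w) (at 0 within S)"
    by (simp add: has_field_derivative_def has_derivative_at_withinI)
  moreover have "0 \<in> interior S" using oS assms(5) by (simp add: S_def interior_open)
  moreover have "1 \<in> S" using assms(6) by (simp add: S_def w_def)
  ultimately have "f (u + 1 *\<^sub>R w) - f (u + 0 *\<^sub>R w) \<ge> G u w * (1 - 0)"
    using convex_on_imp_above_tangent[OF cvx convex_connected[OF cS]] by blast
  then show ?thesis by (simp add: w_def)
qed

lemma simplex_le1: "x \<in> std_simplex \<Longrightarrow> x $ i \<le> 1"
  unfolding std_simplex_def
  using member_le_sum[of i UNIV "\<lambda>i. x $ i"] by auto

lemma compact_simplex: "compact (std_simplex :: (real^'n::finite) set)"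
unfolding compact_eq_bounded_closed proof (intro conjI)
  show "bounded (std_simplex :: (real^'n::finite) set)"
    unfolding bounded_iff
  proof (intro exI ballI)
    fix x :: "real^'n" assume h: "x \<in> std_simplex"
    have "norm x \<le> (\<Sum>i\<in>UNIV. \<bar>x$i\<bar>)" by (rule norm_le_l1_cart)
    also have "\<dots> = 1" using h unfolding std_simplex_def by simp
    finally show "norm x \<le> 1" .
  qed
  have "std_simplex = (\<Inter>i. {x::real^'n. 0 \<le> x $ i}) \<inter> {x. (\<Sum>i\<in>UNIV. x $ i) = 1}"
    unfolding std_simplex_def by auto
  moreover have "closed {x::real^'n. (\<Sum>i\<in>UNIV. x $ i) = 1}"
    by (intro closed_Collect_eq continuous_intros)
  moreover have "closed {x::real^'n. 0 \<le> x $ i}" for i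
    by (intro closed_Collect_le continuous_intros)
  ultimately show "closed (std_simplex :: (real^'n::finite) set)" by (metis closed_Int closed_INT)
qed

lemma run_simplex:
  assumes "fw_away_run A grad x j l \<alpha>"
  shows "x k \<in> std_simplex"
proof (induction k)
  case 0 then show ?case using assms unfolding fw_away_run_def by simp
next
  case (Suc k)
  define g where "g = grad (A *v x k)"
  have H: "l k \<in> supp_idx (x k)" "0 \<le> \<alpha> k" "\<alpha> k \<le> fw_amax g A (x k) (j k) (l k)"
     "x (Suc k) = x k + \<alpha> k *\<^sub>R fw_w g A (x k) (j k) (l k)"
    using assms unfolding fw_away_run_def g_def Let_def by blast+
  have nn: "\<And>i. 0 \<le> x k $ i" and s1: "(\<Sum>i\<in>UNIV. x k $ i) = 1" using Suc unfolding std_simplex_def by auto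
  show ?case
  proof (cases "fw_regular g A (x k) (j k) (l k)")
    case True
    then have a1: "\<alpha> k \<le> 1" and xs: "x (Suc k) = x k + \<alpha> k *\<^sub>R (axis (j k) 1 - x k)"
      using H by (simp_all add: fw_amax_def fw_w_def)
    have c: "x (Suc k) $ i = (1 - \<alpha> k) * x k $ i + (if i = j k then \<alpha> k else 0)" for i
      unfolding xs by (simp add: axis_def algebra_simps)
    have "0 \<le> x (Suc k) $ i" for i unfolding c using nn[of i] a1 H(2) by simp
    moreover have "(\<Sum>i\<in>UNIV. x (Suc k) $ i) = 1"
      unfolding c by (simp add: sum.distrib sum_distrib_left[symmetric] s1)
    ultimately show ?thesis unfolding std_simplex_def by simp
  next
    case False
    then have a1: "\<alpha> k \<le> x k $ l k / (1 - x k $ l k)" and xs: "x (Suc k) = x k + \<alpha> k *\<^sub>R (x k - axis (l k) 1)"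
      using H by (simp_all add: fw_amax_def fw_w_def)
    have c: "x (Suc k) $ i = (1 + \<alpha> k) * x k $ i - (if i = l k then \<alpha> k else 0)" for i
      unfolding xs by (simp add: axis_def algebra_simps)
    have le1: "x k $ l k \<le> 1" using simplex_le1[OF Suc] .
    have "\<alpha> k * (1 - x k $ l k) \<le> x k $ l k"
    proof (cases "x k $ l k = 1")
      case True then show ?thesis using a1 H(2) by simp
    next
      case False then have "1 - x k $ l k > 0" using le1 by simp
      then show ?thesis using a1 by (simp add: pos_le_divide_eq)
    qed
    then have "0 \<le> x (Suc k) $ i" for i unfolding c using nn[of i] H(2)
      by (auto simp: algebra_simps intro: mult_nonneg_nonneg add_nonneg_nonneg)
    moreover have "(\<Sum>i\<in>UNIV. x (Suc k) $ i) = 1"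
      unfolding c by (simp add: sum_subtractf sum_distrib_left[symmetric] s1)
    ultimately show ?thesis unfolding std_simplex_def by simp
  qed
qed

lemma term_bd:
  fixes d ci cl cj :: real
  assumes "d > 0 \<Longrightarrow> ci \<le> cl" "cj \<le> ci"
  shows "d * (ci - (cl + cj) / 2) \<le> \<bar>d\<bar> * ((cl - cj) / 2)"
proof (cases "d > 0")
  case True
  have "ci \<le> cl" using assms(1) True by simp
  then have "ci - (cl + cj) / 2 \<le> (cl - cj) / 2" by (simp add: field_simps)
  then show ?thesis using True mult_left_mono[of "ci - (cl + cj) / 2" "(cl - cj) / 2" d] by simp
next
  case False
  have "d * (ci - (cl + cj) / 2) = (- d) * ((cl + cj) / 2 - ci)" by (simp add: field_simps)
  also have "\<dots> \<le> (- d) * ((cl - cj) / 2)"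
  proof (rule mult_left_mono)
    show "(cl + cj) / 2 - ci \<le> (cl - cj) / 2" using assms(2) by (simp add: field_simps)
    show "0 \<le> - d" using False by simp
  qed
  finally show ?thesis using False by simp
qed

lemma sum_bd:
  fixes X z :: "real^'n::finite" and c :: "'n \<Rightarrow> real"
  assumes "X \<in> std_simplex" "z \<in> std_simplex" "\<And>i. c jj \<le> c i" "\<And>i. i \<in> supp_idx X \<Longrightarrow> c i \<le> c ll"
  shows "(\<Sum>i\<in>UNIV. (X$i - z$i) * c i) \<le> l1dist X z * ((c ll - c jj) / 2)"
proof -
  define m where "m = (c ll + c jj) / 2"
  have s0: "(\<Sum>i\<in>UNIV. (X$i - z$i)) = 0" using assms(1,2) unfolding std_simplex_def
    by (simp add: sum_subtractf)
  have "(\<Sum>i\<in>UNIV. (X$i - z$i) * c i) = (\<Sum>i\<in>UNIV. (X$i - z$i) * (c i - m) + (X$i - z$i) * m)"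
    by (rule sum.cong) (auto simp: algebra_simps)
  also have "\<dots> = (\<Sum>i\<in>UNIV. (X$i - z$i) * (c i - m)) + (\<Sum>i\<in>UNIV. (X$i - z$i)) * m"
    by (simp add: sum.distrib sum_distrib_right)
  also have "\<dots> = (\<Sum>i\<in>UNIV. (X$i - z$i) * (c i - m))" using s0 by simp
  also have "\<dots> \<le> (\<Sum>i\<in>UNIV. \<bar>X$i - z$i\<bar> * ((c ll - c jj) / 2))"
  proof (rule sum_mono)
    fix i
    have "c i \<le> c ll" if pos: "X$i - z$i > 0"
    proof -
      have "0 \<le> z$i" using assms(2) unfolding std_simplex_def by simp
      then have "i \<in> supp_idx X" using pos unfolding supp_idx_def by simp
      then show ?thesis using assms(4) by simp
    qed
    then show "(X$i - z$i) * (c i - m) \<le> \<bar>X$i - z$i\<bar> * ((c ll - c jj) / 2)"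
      unfolding m_def using term_bd assms(3) by blast
  qed
  also have "\<dots> = l1dist X z * ((c ll - c jj) / 2)"
    unfolding l1dist_def by (simp add: sum_distrib_right)
  finally show ?thesis .
qed

lemma lower_min:
  fixes X :: "real^'n::finite" and c :: "'n \<Rightarrow> real"
  assumes "X \<in> std_simplex" "\<And>i. c jj \<le> c i"
  shows "c jj \<le> (\<Sum>i\<in>UNIV. X$i * c i)"
proof -
  have "c jj = (\<Sum>i\<in>UNIV. X$i * c jj)" using assms(1) unfolding std_simplex_def
    by (simp add: sum_distrib_right[symmetric])
  also have "\<dots> \<le> (\<Sum>i\<in>UNIV. X$i * c i)"
    using assms unfolding std_simplex_def by (intro sum_mono mult_left_mono) auto
  finally show ?thesis .
qed

lemma supp_sum:
  fixes X :: "real^'n::finite"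
  assumes "X \<in> std_simplex"
  shows "(\<Sum>i\<in>UNIV. X$i * c i) = (\<Sum>i\<in>supp_idx X. X$i * c i)"
  using assms unfolding std_simplex_def supp_idx_def
  by (intro sum.mono_neutral_right) (auto simp: less_le)

theorem lemma3:
  fixes A :: "real^'n::finite^'m::finite"
    and f :: "real^'m \<Rightarrow> real" and grad :: "real^'m \<Rightarrow> real^'m" and D :: "(real^'m) set"
    and x :: "nat \<Rightarrow> real^'n" and j l :: "nat \<Rightarrow> 'n" and \<alpha> :: "nat \<Rightarrow> real"
  assumes "\<exists>i i'. column i A \<noteq> column i' A"
    and "open D" and "convex D" and "convex_on D f"
    and "\<forall>u\<in>D. (f has_derivative (\<lambda>h. grad u \<bullet> h)) (at u)"
    and "(\<lambda>y. A *v y) ` std_simplex \<subseteq> D"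
    and "mu_star f A > 0"
    and "fw_away_run A grad x j l \<alpha>"
  shows "\<forall>k. let u = A *v x k; v = fw_dir (grad u) A (x k) (j k) (l k) in
           ereal ((grad u \<bullet> v)\<^sup>2) \<ge> mu_star f A / 2 * ereal (f u - fstar f A) \<and>
           grad u \<bullet> v \<le> fstar f A - f u"
proof
  fix k
  define X where "X = x k"
  define u where "u = A *v X"
  define g where "g = grad u"
  define c where "c i = g \<bullet> column i A" for i
  define v where "v = fw_dir g A X (j k) (l k)"
  define fs where "fs = fstar f A"
  define h where "h = f u - fs"
  have hX: "X \<in> std_simplex" unfolding X_def using run_simplex[OF assms(8)] .
  have DA: "\<And>y. y \<in> std_simplex \<Longrightarrow> A *v y \<in> D" using assms(6) by auto
  have uD: "u \<in> D" unfolding u_def using DA[OF hX] .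
  have R: "\<forall>i. c (j k) \<le> c i" "l k \<in> supp_idx X" "\<forall>i\<in>supp_idx X. c i \<le> c (l k)"
    using assms(8) unfolding fw_away_run_def Let_def c_def g_def u_def X_def by blast+
  have gA: "\<And>y. g \<bullet> (A *v y) = (\<Sum>i\<in>UNIV. y$i * c i)" unfolding c_def by (rule inner_Av)
  have contf: "continuous_on D f"
    using assms(5) by (intro has_derivative_continuous_on) (auto intro: has_derivative_at_withinI)
  have cont: "continuous_on std_simplex (\<lambda>y. f (A *v y))"
    by (rule continuous_on_compose2[OF contf linear_continuous_on]) (auto simp: assms(6)[unfolded image_subset_iff] intro: linear_linear[THEN iffD1])
  obtain z0 where z0: "z0 \<in> std_simplex" "\<forall>y\<in>std_simplex. f (A *v z0) \<le> f (A *v y)"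
    using continuous_attains_inf[OF compact_simplex _ cont] hX by blast
  have fs_eq: "fs = f (A *v z0)" unfolding fs_def fstar_def
    by (rule cInf_eq_minimum) (use z0 in auto)
  have fs_le: "\<And>y. y \<in> std_simplex \<Longrightarrow> fs \<le> f (A *v y)" using z0 fs_eq by auto
  have z0Z: "z0 \<in> Zstar f A" unfolding Zstar_def using z0(1) fs_eq fs_def by simp
  have h0: "h \<ge> 0" unfolding h_def u_def using fs_le[OF hX] by simp
  define r where "r = c (j k) - g \<bullet> u"
  define s where "s = g \<bullet> u - c (l k)"
  have gu: "g \<bullet> u = (\<Sum>i\<in>UNIV. X$i * c i)" unfolding u_def by (rule gA)
  have r0: "r \<le> 0" unfolding r_def gu using lower_min[OF hX] R(1) by simp
  have gv: "g \<bullet> v \<le> r \<and> g \<bullet> v \<le> s"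
  proof (cases "fw_regular g A X (j k) (l k)")
    case True
    then have e: "g \<bullet> v = r" unfolding v_def fw_dir_def r_def c_def u_def by (simp add: inner_diff_right)
    have "r \<le> s"
    proof (cases "g \<bullet> (column (j k) A - A *v X) < g \<bullet> (A *v X - column (l k) A)")
      case True then show ?thesis unfolding r_def s_def c_def u_def by (simp add: inner_diff_right)
    next
      case False
      then have "card (supp_idx X) = 1" using \<open>fw_regular g A X (j k) (l k)\<close> unfolding fw_regular_def by blast
      then obtain a where "supp_idx X = {a}" by (rule card_1_singletonE)
      then have S1: "supp_idx X = {l k}" using R(2) by simp
      have "(\<Sum>i\<in>UNIV. X$i * 1) = X $ l k" using supp_sum[OF hX, of "\<lambda>_. 1"] S1 by simp
      then have X1: "X $ l k = 1" using hX unfolding std_simplex_def by simp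
      have "g \<bullet> u = c (l k)" unfolding gu supp_sum[OF hX] S1 using X1 by simp
      then show ?thesis using r0 unfolding s_def by simp
    qed
    then show ?thesis using e by simp
  next
    case False
    then have e: "g \<bullet> v = s" unfolding v_def fw_dir_def s_def c_def u_def by (simp add: inner_diff_right)
    have "s \<le> r" using False unfolding fw_regular_def r_def s_def c_def u_def by (simp add: inner_diff_right)
    then show ?thesis using e by simp
  qed
  define M where "M = - (g \<bullet> v)"
  have hz: "h \<le> - r \<and> h \<le> l1dist X z * M" if zZ: "z \<in> Zstar f A" for z
  proof -
    have zs: "z \<in> std_simplex" and fz: "f (A *v z) = fs" using zZ unfolding Zstar_def fs_def by auto
    have "f (A *v z) \<ge> f u + g \<bullet> (A *v z - u)"
      unfolding g_def using grad_ineq[OF assms(2,4), where G="\<lambda>u h. grad u \<bullet> h" and u=u and y="A *v z"] assms(5) uD DA[OF zs]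
      by (simp add: linear_iff inner_add_right)
    then have h1: "h \<le> g \<bullet> u - g \<bullet> (A *v z)" unfolding h_def fz by (simp add: inner_diff_right)
    have "g \<bullet> u - g \<bullet> (A *v z) = (\<Sum>i\<in>UNIV. (X$i - z$i) * c i)"
      unfolding gu gA by (simp add: sum_subtractf algebra_simps)
    also have "\<dots> \<le> l1dist X z * ((c (l k) - c (j k)) / 2)"
      using sum_bd[OF hX zs, of c "j k" "l k"] R by blast
    also have "\<dots> \<le> l1dist X z * M"
    proof (rule mult_left_mono)
      show "0 \<le> l1dist X z" unfolding l1dist_def by (simp add: sum_nonneg)
      show "(c (l k) - c (j k)) / 2 \<le> M" using gv unfolding M_def r_def s_def by simp
    qed
    finally have "h \<le> l1dist X z * M" using h1 by simp
    moreover have "h \<le> - r" using h1 lower_min[OF zs, of c "j k"] R(1) unfolding r_def gA by simp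
    ultimately show ?thesis by simp
  qed
  have hM: "h \<le> M" using hz[OF z0Z] gv unfolding M_def by simp
  have claim2: "g \<bullet> v \<le> fs - f u" using hM unfolding M_def h_def by simp
  have claim1: "ereal ((g \<bullet> v)\<^sup>2) \<ge> mu_star f A / 2 * ereal h"
  proof (cases "h = 0")
    case True then show ?thesis by (simp add: zero_ereal_def[symmetric])
  next
    case False
    then have hp: "h > 0" using h0 by simp
    then have XZ: "X \<in> std_simplex - Zstar f A" using hX unfolding Zstar_def h_def fs_def u_def by auto
    define Dz where "Dz = distZ f A X"
    have mule: "mu_star f A \<le> ereal (2 * h / Dz\<^sup>2)"
      unfolding mu_star_def Dz_def h_def fs_def u_def by (rule INF_lower[OF XZ])
    obtain \<mu> where mu: "mu_star f A = ereal \<mu>"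
      using mule assms(7) by (cases "mu_star f A") auto
    have mup: "\<mu> > 0" and mule': "\<mu> \<le> 2 * h / Dz\<^sup>2" using mu mule assms(7) by auto
    have Dz0: "Dz\<^sup>2 > 0"
    proof (rule ccontr)
      assume "\<not> Dz\<^sup>2 > 0"
      then have "Dz\<^sup>2 = 0" using zero_le_power2[of Dz] by simp
      then show False using mule' mup by simp
    qed
    have Mp: "M > 0" using hM hp by simp
    have "h / M \<le> Dz" unfolding Dz_def distZ_def
    proof (rule cInf_greatest)
      show "(\<lambda>z. l1dist X z) ` Zstar f A \<noteq> {}" using z0Z by blast
      fix t assume "t \<in> (\<lambda>z. l1dist X z) ` Zstar f A"
      then obtain z where "z \<in> Zstar f A" "t = l1dist X z" by blast
      then show "h / M \<le> t" using hz[of z] Mp by (simp add: divide_le_eq mult.commute)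
    qed
    then have hDM: "h \<le> Dz * M" using Mp by (simp add: divide_le_eq)
    have a1: "\<mu> * Dz\<^sup>2 \<le> 2 * h" using mule' Dz0 by (simp add: le_divide_eq)
    have a2: "h\<^sup>2 \<le> (Dz * M)\<^sup>2" using hDM h0 by (intro power_mono) auto
    have "h * (\<mu> * Dz\<^sup>2) \<le> h * (2 * h)" using a1 hp by (intro mult_left_mono) auto
    then have "(\<mu> * h) * Dz\<^sup>2 \<le> 2 * h * h" by (simp add: algebra_simps)
    also have "\<dots> = 2 * h\<^sup>2" by (simp add: power2_eq_square)
    also have "\<dots> \<le> (2 * M\<^sup>2) * Dz\<^sup>2" using a2 by (simp add: power_mult_distrib algebra_simps)
    finally have "\<mu> * h \<le> 2 * M\<^sup>2" using Dz0 by (simp add: mult_le_cancel_right)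
    then have "\<mu> / 2 * h \<le> (g \<bullet> v)\<^sup>2" unfolding M_def by simp
    then show ?thesis unfolding mu by simp
  qed
  show "let u = A *v x k; v = fw_dir (grad u) A (x k) (j k) (l k) in
           ereal ((grad u \<bullet> v)\<^sup>2) \<ge> mu_star f A / 2 * ereal (f u - fstar f A) \<and>
           grad u \<bullet> v \<le> fstar f A - f u"
    using claim1 claim2 unfolding Let_def X_def u_def g_def v_def h_def fs_def by simp
qed

end
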